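(* For every integer $k\ge 1$, every $\mathcal{O}_k$-free graph $G$ of girth at least 11 has average degree $2|E(G)|/|V(G)|$ at most $2k$.
   Context: All graphs are finite, simple and nonempty. Two vertex-disjoint subgraphs are independent if there is no edge between them. A graph $G$ is $\mathcal{O}_k$-free if it does not contain $k$ pairwise vertex-disjoint and pairwise independent cycles; equivalently, $G$ has no induced subgraph isomorphic to a disjoint union of $k$ cycles. The girth is the minimum length of a cycle (infinite for forests). *)

theory Defs
  imports Complex_Main
begin

definition simple_graph :: "'a set \<Rightarrow> ('a \<Rightarrow> 'a \<Rightarrow> bool) \<Rightarrow> bool" where
  "simple_graph V E \<longleftrightarrow> finite V \<and> V \<noteq> {} \<and>
     (\<forall>u v. E u v \<longrightarrow> u \<in> V \<and> v \<in> V) \<and>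
     (\<forall>u v. E u v \<longrightarrow> E v u) \<and> (\<forall>u. \<not> E u u)"

definition edges :: "('a \<Rightarrow> 'a \<Rightarrow> bool) \<Rightarrow> 'a set set" where
  "edges E = {{u, v} | u v. E u v}"

definition is_cycle :: "'a set \<Rightarrow> ('a \<Rightarrow> 'a \<Rightarrow> bool) \<Rightarrow> 'a list \<Rightarrow> bool" where
  "is_cycle V E cs \<longleftrightarrow> length cs \<ge> 3 \<and> distinct cs \<and> set cs \<subseteq> V \<and>
     (\<forall>i < length cs. E (cs ! i) (cs ! ((i + 1) mod length cs)))"

definition girth_at_least :: "'a set \<Rightarrow> ('a \<Rightarrow> 'a \<Rightarrow> bool) \<Rightarrow> nat \<Rightarrow> bool" where
  "girth_at_least V E g \<longleftrightarrow> (\<forall>cs. is_cycle V E cs \<longrightarrow> length cs \<ge> g)"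

definition independent_sets :: "('a \<Rightarrow> 'a \<Rightarrow> bool) \<Rightarrow> 'a set \<Rightarrow> 'a set \<Rightarrow> bool" where
  "independent_sets E A B \<longleftrightarrow> (\<forall>a\<in>A. \<forall>b\<in>B. \<not> E a b)"

definition O_free :: "'a set \<Rightarrow> ('a \<Rightarrow> 'a \<Rightarrow> bool) \<Rightarrow> nat \<Rightarrow> bool" where
  "O_free V E k \<longleftrightarrow> \<not> (\<exists>Cs :: 'a list list. length Cs = k \<and>
      (\<forall>i < k. is_cycle V E (Cs ! i)) \<and>
      (\<forall>i < k. \<forall>j < k. i \<noteq> j \<longrightarrow>
          set (Cs ! i) \<inter> set (Cs ! j) = {} \<and>
          independent_sets E (set (Cs ! i)) (set (Cs ! j))))"

end

theory Submission
  imports Defs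
begin

definition cyc :: "('a \<Rightarrow> 'a \<Rightarrow> bool) \<Rightarrow> 'a list \<Rightarrow> bool" where
  "cyc E cs \<longleftrightarrow> 3 \<le> length cs \<and> distinct cs \<and> successively E cs \<and> E (last cs) (hd cs)"

lemma is_cycle_cyc: "is_cycle V E cs \<longleftrightarrow> cyc E cs \<and> set cs \<subseteq> V"
proof
  assume H: "is_cycle V E cs"
  hence L: "length cs \<ge> 3" and S: "\<forall>i < length cs. E (cs ! i) (cs ! ((i + 1) mod length cs))"
    by (auto simp: is_cycle_def)
  have "successively E cs"
    unfolding successively_conv_nth
  proof (intro allI impI)
    fix i assume "Suc i < length cs"
    thus "E (cs ! i) (cs ! Suc i)" using S[rule_format, of i] by simp
  qed
  moreover have "E (last cs) (hd cs)"
  proof -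
    have "E (cs ! (length cs - 1)) (cs ! ((length cs - 1 + 1) mod length cs))"
      using S L by auto
    moreover have "(length cs - 1 + 1) mod length cs = 0"
    proof -
      have "length cs - 1 + 1 = length cs" using L by arith
      thus ?thesis by simp
    qed
    moreover have "cs \<noteq> []" using L by auto
    ultimately show ?thesis by (simp add: last_conv_nth hd_conv_nth)
  qed
  ultimately show "cyc E cs \<and> set cs \<subseteq> V" using H by (auto simp: is_cycle_def cyc_def)
next
  assume H: "cyc E cs \<and> set cs \<subseteq> V"
  hence L: "length cs \<ge> 3" and S: "successively E cs" and Z: "E (last cs) (hd cs)"
    by (auto simp: cyc_def)
  have "\<forall>i < length cs. E (cs ! i) (cs ! ((i + 1) mod length cs))"
  proof (intro allI impI)
    fix i assume i: "i < length cs"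
    show "E (cs ! i) (cs ! ((i + 1) mod length cs))"
    proof (cases "Suc i < length cs")
      case True thus ?thesis using successively_nth[OF S True] by simp
    next
      case False
      hence "i = length cs - 1" using i by simp
      moreover have "i + 1 = length cs" using i False by simp
      moreover have "cs \<noteq> []" using L by auto
      ultimately show ?thesis using Z by (simp add: last_conv_nth hd_conv_nth)
    qed
  qed
  thus "is_cycle V E cs" using H by (auto simp: is_cycle_def cyc_def)
qed

lemma successively_take: "successively E xs \<Longrightarrow> successively E (take n xs)"
  by (metis append_take_drop_id successively_append_iff)

lemma successively_drop: "successively E xs \<Longrightarrow> successively E (drop n xs)"
  by (metis append_take_drop_id successively_append_iff)

lemma cyc_rotate1:
  assumes "cyc E cs" shows "cyc E (rotate1 cs)"
proof -
  obtain x xs where cs: "cs = x # xs" using assms by (cases cs) (auto simp: cyc_def)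
  have ne: "xs \<noteq> []" using assms cs by (auto simp: cyc_def)
  show ?thesis using assms ne unfolding cs cyc_def
    by (auto simp: successively_append_iff successively_Cons)
qed

lemma cyc_rotate: "cyc E cs \<Longrightarrow> cyc E (rotate n cs)"
  by (induction n) (auto intro: cyc_rotate1)

definition arc :: "('a \<Rightarrow> 'a \<Rightarrow> bool) \<Rightarrow> 'a list \<Rightarrow> 'a \<Rightarrow> 'a \<Rightarrow> 'a list \<Rightarrow> bool" where
  "arc E cs a b A \<longleftrightarrow> A \<noteq> [] \<and> hd A = a \<and> last A = b \<and> distinct A \<and> successively E A \<and> set A \<subseteq> set cs"

lemma arc1:
  assumes "cyc E cs" "1 \<le> j" "j < length cs"
  shows "arc E cs (hd cs) (cs ! j) (take (Suc j) cs)" "length (take (Suc j) cs) = Suc j"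
proof -
  have ne: "cs \<noteq> []" using assms by auto
  show "length (take (Suc j) cs) = Suc j" using assms by simp
  show "arc E cs (hd cs) (cs ! j) (take (Suc j) cs)"
    unfolding arc_def using assms ne
    by (auto simp: cyc_def successively_take last_conv_nth hd_conv_nth dest: in_set_takeD)
qed

lemma arc2:
  assumes "cyc E cs" "1 \<le> j" "j < length cs" and sym: "\<forall>u v. E u v \<longrightarrow> E v u"
  shows "arc E cs (hd cs) (cs ! j) (hd cs # rev (drop j cs))" "length (hd cs # rev (drop j cs)) = length cs - j + 1"
proof -
  have ne: "cs \<noteq> []" using assms by auto
  show "length (hd cs # rev (drop j cs)) = length cs - j + 1" using assms by simp
  have d: "distinct cs" using assms(1) by (simp add: cyc_def)
  have "hd cs \<notin> set (drop j cs)"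
  proof
    assume "hd cs \<in> set (drop j cs)"
    then obtain i where "i < length (drop j cs)" "drop j cs ! i = hd cs" by (auto simp: in_set_conv_nth)
    hence "cs ! (j + i) = cs ! 0" "j + i < length cs" using ne by (auto simp: hd_conv_nth)
    thus False using d assms(2) nth_eq_iff_index_eq[OF d] by fastforce
  qed
  moreover have "successively E (drop j cs)" using assms(1) by (simp add: cyc_def successively_drop)
  hence "successively (\<lambda>x y. E y x) (drop j cs)"
    by (rule successively_mono) (use sym in blast)
  moreover have "E (hd cs) (last cs)" using assms(1) sym by (simp add: cyc_def)
  moreover have "last (drop j cs) = last cs" using assms by simp
  moreover have "hd (drop j cs) = cs ! j" using assms by (simp add: hd_drop_conv_nth)
  ultimately show "arc E cs (hd cs) (cs ! j) (hd cs # rev (drop j cs))"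
    unfolding arc_def using assms ne d
    by (auto simp: successively_Cons hd_rev last_rev dest: in_set_dropD)
qed

lemma arc_short_hd:
  assumes "cyc E cs" "1 \<le> j" "j < length cs" and sym: "\<forall>u v. E u v \<longrightarrow> E v u"
  shows "\<exists>A. arc E cs (hd cs) (cs ! j) A \<and> 2 * length A \<le> length cs + 2"
proof (cases "2 * Suc j \<le> length cs + 2")
  case True thus ?thesis using arc1[OF assms(1-3)] by metis
next
  case False
  hence "2 * (length cs - j + 1) \<le> length cs + 2" using assms by simp
  thus ?thesis using arc2[OF assms] by metis
qed

lemma arc_rotate: "arc E (rotate n cs) a b A \<Longrightarrow> arc E cs a b A"
  by (simp add: arc_def)

lemma arc_short:
  assumes "cyc E cs" "a \<in> set cs" "b \<in> set cs" "a \<noteq> b" and sym: "\<forall>u v. E u v \<longrightarrow> E v u"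
  shows "\<exists>A. arc E cs a b A \<and> 2 * length A \<le> length cs + 2"
proof -
  obtain n where n: "n < length cs" "cs ! n = a" using assms(2) by (auto simp: in_set_conv_nth)
  define cs' where "cs' = rotate n cs"
  have c': "cyc E cs'" using assms(1) cyc_rotate cs'_def by blast
  have ne: "cs \<noteq> []" using assms(2) by auto
  have h: "hd cs' = a" using n ne by (simp add: cs'_def hd_rotate_conv_nth)
  have "b \<in> set cs'" using assms(3) by (simp add: cs'_def)
  then obtain j where j: "j < length cs'" "cs' ! j = b" by (auto simp: in_set_conv_nth)
  have "cs' \<noteq> []" using j by auto
  hence "j \<noteq> 0" using j h assms(4) by (metis hd_conv_nth)
  then obtain A where "arc E cs' (hd cs') (cs' ! j) A" "2 * length A \<le> length cs' + 2"
    using arc_short_hd[OF c' _ j(1) sym] by auto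
  thus ?thesis using h j by (auto simp: cs'_def intro: arc_rotate)
qed

lemma cyc_arc_mid:
  assumes "arc E cs a b A" "a \<noteq> b" "mid \<noteq> []" "distinct mid" "set mid \<inter> set cs = {}"
    "successively E mid" "E b (hd mid)" "E (last mid) a"
  shows "cyc E (A @ mid)"
proof -
  have "length A \<ge> 2"
  proof (rule ccontr)
    assume "\<not> 2 \<le> length A"
    moreover have "A \<noteq> []" using assms(1) by (simp add: arc_def)
    ultimately obtain z where "A = [z]" by (cases A) (auto simp: Suc_le_eq)
    thus False using assms(1,2) by (auto simp: arc_def)
  qed
  moreover have "length mid \<ge> 1" using assms(3) by (cases mid) auto
  ultimately show ?thesis using assms unfolding cyc_def arc_def
    by (auto simp: successively_append_iff)
qed

lemma arc_cyc: "arc E C a b A \<Longrightarrow> 3 \<le> length A \<Longrightarrow> E b a \<Longrightarrow> cyc E A"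
  by (simp add: arc_def cyc_def)

locale G =
  fixes V :: "'a set" and E :: "'a \<Rightarrow> 'a \<Rightarrow> bool"
  assumes sg: "simple_graph V E" and gi: "girth_at_least V E 11"
begin

lemma sym: "\<forall>u v. E u v \<longrightarrow> E v u" using sg by (simp add: simple_graph_def)
lemma irr: "\<not> E u u" using sg by (simp add: simple_graph_def)
lemma finV: "finite V" using sg by (simp add: simple_graph_def)
lemma girth: "cyc E cs \<Longrightarrow> set cs \<subseteq> V \<Longrightarrow> 11 \<le> length cs"
  using gi by (auto simp: girth_at_least_def is_cycle_cyc)

lemma short_contra:
  assumes UV: "U \<subseteq> V" and C: "cyc E C" "set C \<subseteq> U"
    and sh: "\<forall>C'. cyc E C' \<and> set C' \<subseteq> U \<longrightarrow> length C \<le> length C'"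
    and a: "a \<in> set C" "b \<in> set C" "a \<noteq> b"
    and m: "mid \<noteq> []" "distinct mid" "set mid \<inter> set C = {}" "set mid \<subseteq> U" "length mid \<le> 3"
      "successively E mid" "E b (hd mid)" "E (last mid) a"
  shows False
proof -
  obtain A where A: "arc E C a b A" "2 * length A \<le> length C + 2"
    using arc_short[OF C(1) a sym] by blast
  have "cyc E (A @ mid)" using cyc_arc_mid[OF A(1) a(3) m(1-3) m(6-8)] .
  moreover have "set (A @ mid) \<subseteq> U" using A(1) C(2) m(4) by (auto simp: arc_def)
  ultimately have "length C \<le> length A + length mid" using sh by fastforce
  moreover have "11 \<le> length C" using girth C UV by blast
  ultimately show False using A(2) m(5) by linarith
qed

definition NC :: "'a list \<Rightarrow> 'a set \<Rightarrow> 'a set" where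
  "NC C U = {x \<in> U. x \<in> set C \<or> (\<exists>c\<in>set C. E x c)}"

lemma one_nb:
  assumes UV: "U \<subseteq> V" and C: "cyc E C" "set C \<subseteq> U"
    and sh: "\<forall>C'. cyc E C' \<and> set C' \<subseteq> U \<longrightarrow> length C \<le> length C'"
    and w: "w \<in> U" "w \<notin> NC C U" and xy: "x \<in> NC C U" "y \<in> NC C U" "E w x" "E w y"
  shows "x = y"
proof (rule ccontr)
  assume ne: "x \<noteq> y"
  have xC: "x \<notin> set C" using w xy sym by (auto simp: NC_def)
  have yC: "y \<notin> set C" using w xy sym by (auto simp: NC_def)
  have wC: "w \<notin> set C" using w by (auto simp: NC_def)
  obtain c1 where c1: "c1 \<in> set C" "E x c1" using xy xC by (auto simp: NC_def)
  obtain c2 where c2: "c2 \<in> set C" "E y c2" using xy yC by (auto simp: NC_def)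
  have wx: "w \<noteq> x" "w \<noteq> y" using w xy by auto
  have U: "x \<in> U" "y \<in> U" using xy by (auto simp: NC_def)
  show False
  proof (cases "c1 = c2")
    case True
    have "cyc E [c1, x, w, y]" unfolding cyc_def
      using xC yC wC c1 c2 wx ne True xy sym by auto
    moreover have "set [c1, x, w, y] \<subseteq> V" using U w c1 C UV by auto
    ultimately show False using girth by fastforce
  next
    case False
    show False
      by (rule short_contra[OF UV C sh c2(1) c1(1) False[symmetric], of "[x, w, y]"])
         (use xC yC wC c1 c2 wx ne U w xy sym in auto)
  qed
qed

lemma no_edge_out:
  assumes "w \<in> U" "w \<notin> NC C U" "c \<in> set C"
  shows "\<not> E w c" "\<not> E c w"
  using assms sym by (auto simp: NC_def)

lemma outside_nonempty:
  assumes UV: "U \<subseteq> V" and C: "cyc E C" "set C \<subseteq> U"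
    and sh: "\<forall>C'. cyc E C' \<and> set C' \<subseteq> U \<longrightarrow> length C \<le> length C'"
    and deg: "\<forall>v\<in>U. 3 \<le> card {u\<in>U. E v u}"
  shows "U - NC C U \<noteq> {}"
proof -
  have finU: "finite U" using finV UV finite_subset by blast
  define c0 where "c0 = hd C"
  have Cne: "C \<noteq> []" and LC: "3 \<le> length C" using C by (auto simp: cyc_def)
  have c0C: "c0 \<in> set C" using Cne by (simp add: c0_def)
  have c0U: "c0 \<in> U" using c0C C by auto
  define S where "S = {u\<in>U. E c0 u}"
  have cS: "3 \<le> card S" using deg c0U by (simp add: S_def)
  have finS: "finite S" using finU by (simp add: S_def)
  have "\<exists>z\<in>S. z \<notin> set C"
  proof (rule ccontr)
    assume "\<not> (\<exists>z\<in>S. z \<notin> set C)"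
    hence SC: "S \<subseteq> set C" by auto
    have "card (S - {C ! 1, last C}) \<ge> card S - card {C ! 1, last C}"
      by (rule diff_card_le_card_Diff) simp
    moreover have "card {C ! 1, last C} \<le> 2" by (simp add: card_insert_le_m1)
    ultimately have "card (S - {C ! 1, last C}) > 0" using cS by linarith
    hence "S - {C ! 1, last C} \<noteq> {}" by (simp add: card_gt_0_iff)
    then obtain z where "z \<in> S - {C ! 1, last C}" by blast
    hence z: "z \<in> S" "z \<noteq> C ! 1" "z \<noteq> last C" by auto
    have "z \<in> set C" using z SC by auto
    then obtain j where j: "j < length C" "C ! j = z" by (auto simp: in_set_conv_nth)
    have Ez: "E c0 z" using z by (simp add: S_def)
    have "j \<noteq> 0"
    proof
      assume "j = 0"
      hence "z = c0" using j Cne by (simp add: c0_def hd_conv_nth)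
      thus False using Ez irr by simp
    qed
    moreover have "j \<noteq> 1" using j z by auto
    moreover have "j \<noteq> length C - 1" using j z Cne by (auto simp: last_conv_nth)
    ultimately have j2: "2 \<le> j" "j + 2 \<le> length C" using j by auto
    have Ezc: "E z c0" using Ez sym by blast
    let ?A1 = "take (Suc j) C" and ?A2 = "hd C # rev (drop j C)"
    have a1: "arc E C c0 z ?A1" using arc1(1)[OF C(1), of j] j j2 by (simp add: c0_def)
    have a2: "arc E C c0 z ?A2" using arc2(1)[OF C(1), of j] j j2 sym by (simp add: c0_def)
    have l1: "length ?A1 = Suc j" using j by simp
    have l2: "length ?A2 = length C - j + 1" using j by simp
    have "cyc E ?A1" using arc_cyc[OF a1 _ Ezc] l1 j2 by simp
    moreover have "set ?A1 \<subseteq> U" using a1 C by (auto simp: arc_def)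
    ultimately have "length C \<le> Suc j" using sh l1 by metis
    moreover have "cyc E ?A2" using arc_cyc[OF a2 _ Ezc] l2 j2 by simp
    moreover have "set ?A2 \<subseteq> U" using a2 C by (auto simp: arc_def)
    ultimately have "length C \<le> length C - j + 1" using sh l2 by metis
    thus False using \<open>length C \<le> Suc j\<close> j2 by linarith
  qed
  then obtain z where z: "z \<in> U" "E c0 z" "z \<notin> set C" by (auto simp: S_def)
  have "card {u\<in>U. E z u} \<ge> 3" using deg z by auto
  hence "card ({u\<in>U. E z u} - {c0}) > 0"
    using diff_card_le_card_Diff[of "{c0}" "{u\<in>U. E z u}"] by simp
  hence "{u\<in>U. E z u} - {c0} \<noteq> {}" by (simp add: card_gt_0_iff)
  then obtain y where "y \<in> {u\<in>U. E z u} - {c0}" by blast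
  hence y: "y \<in> U" "E z y" "y \<noteq> c0" by auto
  have yz: "y \<noteq> z" using y irr by auto
  have yC: "y \<notin> set C"
  proof
    assume yC: "y \<in> set C"
    show False
      by (rule short_contra[OF UV C sh yC c0C y(3), of "[z]"])
         (use z y in auto)
  qed
  have "\<not> E y c'" if c': "c' \<in> set C" for c'
  proof
    assume Ey: "E y c'"
    show False
    proof (cases "c' = c0")
      case True
      have "cyc E [c0, z, y]" unfolding cyc_def using z y yz yC c0C True Ey by auto
      moreover have "set [c0, z, y] \<subseteq> V" using z y c0U UV by auto
      ultimately show False using girth by fastforce
    next
      case False
      show False
        by (rule short_contra[OF UV C sh c' c0C False, of "[z, y]"])
           (use z y yz yC Ey in auto)
    qed
  qed
  hence "y \<in> U - NC C U" using y yC by (auto simp: NC_def)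
  thus ?thesis by blast
qed

lemma has_cycle:
  assumes UV: "U \<subseteq> V" and ne: "U \<noteq> {}" and deg: "\<forall>v\<in>U. 2 \<le> card {u\<in>U. E v u}"
  shows "\<exists>C. cyc E C \<and> set C \<subseteq> U"
proof -
  have finU: "finite U" using finV UV finite_subset by blast
  define P where "P xs \<longleftrightarrow> xs \<noteq> [] \<and> distinct xs \<and> set xs \<subseteq> U \<and> successively E xs" for xs
  obtain v0 where "v0 \<in> U" using ne by blast
  hence "P [v0]" by (simp add: P_def)
  moreover have "\<forall>xs. P xs \<longrightarrow> length xs < card U + 1"
  proof (intro allI impI)
    fix xs assume "P xs"
    hence "card (set xs) \<le> card U" using finU by (intro card_mono) (auto simp: P_def)
    moreover have "card (set xs) = length xs" using \<open>P xs\<close> by (simp add: P_def distinct_card)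
    ultimately have "length xs \<le> card U" by simp
    thus "length xs < card U + 1" by simp
  qed
  ultimately obtain p where p: "P p" and mx: "\<forall>ys. P ys \<longrightarrow> length ys \<le> length p"
    using ex_has_greatest_nat[of P "[v0]" length "card U + 1"] by blast
  have pne: "p \<noteq> []" and pd: "distinct p" and pU: "set p \<subseteq> U" and ps: "successively E p"
    using p by (auto simp: P_def)
  define v where "v = hd p"
  have v0: "v = p ! 0" using pne by (simp add: v_def hd_conv_nth)
  have vU: "v \<in> U" using pne pU by (auto simp: v_def)
  define Nv where "Nv = {u\<in>U. E v u}"
  have inP: "u \<in> set p" if "u \<in> Nv" for u
  proof (rule ccontr)
    assume "u \<notin> set p"
    moreover have "E u v" using that sym by (auto simp: Nv_def)
    ultimately have "P (u # p)" using p that unfolding P_def Nv_def v_def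
      by (auto simp: successively_Cons)
    thus False using mx by fastforce
  qed
  have "card Nv \<ge> 2" using deg vU by (simp add: Nv_def)
  have "\<not> Nv \<subseteq> {p ! 1}"
  proof
    assume "Nv \<subseteq> {p ! 1}"
    hence "card Nv \<le> card {p ! 1}" by (intro card_mono) auto
    thus False using \<open>card Nv \<ge> 2\<close> by simp
  qed
  then obtain u where u: "u \<in> Nv" "u \<noteq> p ! 1" by blast
  have "u \<in> set p" using inP u by blast
  then obtain j where j: "j < length p" "p ! j = u" by (auto simp: in_set_conv_nth)
  have "j \<noteq> 0"
  proof
    assume "j = 0"
    hence "u = v" using j v0 by simp
    thus False using u irr by (simp add: Nv_def)
  qed
  moreover have "j \<noteq> 1" using j u by auto
  ultimately have j2: "2 \<le> j" by simp
  let ?C = "take (Suc j) p"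
  have "cyc E ?C" unfolding cyc_def
  proof (intro conjI)
    show "3 \<le> length ?C" using j j2 by simp
    show "distinct ?C" using pd by simp
    show "successively E ?C" using ps by (rule successively_take)
    have "last ?C = u" using j by (simp add: take_Suc_conv_app_nth)
    moreover have "hd ?C = v" using pne by (simp add: v_def)
    moreover have "E u v" using u sym by (auto simp: Nv_def)
    ultimately show "E (last ?C) (hd ?C)" by simp
  qed
  moreover have "set ?C \<subseteq> U" using pU by (meson order_trans set_take_subset)
  ultimately show ?thesis by blast
qed

definition good :: "'a set \<Rightarrow> 'a list list \<Rightarrow> bool" where
  "good U Cs \<longleftrightarrow> (\<forall>i<length Cs. cyc E (Cs!i) \<and> set (Cs!i) \<subseteq> U) \<and>
     (\<forall>i<length Cs. \<forall>j<length Cs. i \<noteq> j \<longrightarrow> set (Cs!i) \<inter> set (Cs!j) = {} \<and>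
        independent_sets E (set (Cs!i)) (set (Cs!j)))"

lemma good_cons:
  assumes g: "good U' Cs" and U': "U' \<subseteq> U" and C: "cyc E C" "set C \<subseteq> U"
    and sep: "\<forall>x\<in>U'. \<forall>c\<in>set C. \<not> E x c \<and> \<not> E c x \<and> x \<noteq> c"
  shows "good U (C # Cs)"
proof -
  have A: "\<forall>i<length (C # Cs). cyc E ((C # Cs) ! i) \<and> set ((C # Cs) ! i) \<subseteq> U"
  proof (intro allI impI)
    fix i assume i: "i < length (C # Cs)"
    show "cyc E ((C # Cs) ! i) \<and> set ((C # Cs) ! i) \<subseteq> U" using i g C U' by (cases i) (auto simp: good_def)
  qed
  have B: "\<forall>i<length (C # Cs). \<forall>j<length (C # Cs). i \<noteq> j \<longrightarrow> set ((C # Cs) ! i) \<inter> set ((C # Cs) ! j) = {} \<and>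
        independent_sets E (set ((C # Cs) ! i)) (set ((C # Cs) ! j))"
  proof (intro allI impI)
  fix i j assume i: "i < length (C # Cs)" and j: "j < length (C # Cs)" and ij: "i \<noteq> j"
  have sub: "set (Cs ! n) \<subseteq> U'" if "n < length Cs" for n using g that by (auto simp: good_def)
  show "set ((C # Cs) ! i) \<inter> set ((C # Cs) ! j) = {} \<and>
        independent_sets E (set ((C # Cs) ! i)) (set ((C # Cs) ! j))"
  proof (cases i)
    case 0
    then obtain j' where j': "j = Suc j'" "j' < length Cs" using ij j by (cases j) auto
    show ?thesis using sub[OF j'(2)] sep 0 j' unfolding independent_sets_def by fastforce
  next
    case (Suc i')
    show ?thesis
    proof (cases j)
      case 0
      show ?thesis using sub[of i'] i Suc sep 0 unfolding independent_sets_def by fastforce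
    next
      case (Suc j')
      thus ?thesis using g i j ij \<open>i = Suc i'\<close> by (auto simp: good_def)
    qed
  qed
  qed
  show ?thesis using A B by (simp only: good_def)
qed

lemma main:
  "\<forall>U. U \<subseteq> V \<longrightarrow> (k = 0 \<or> U \<noteq> {}) \<longrightarrow> (\<forall>v\<in>U. k + 1 \<le> card {u\<in>U. E v u}) \<longrightarrow>
     (\<exists>Cs. length Cs = k \<and> good U Cs)"
proof (induction k)
  case 0
  show ?case by (auto simp: good_def)
next
  case (Suc k)
  show ?case
  proof (intro allI impI)
    fix U assume UV: "U \<subseteq> V" and ne: "Suc k = 0 \<or> U \<noteq> {}"
      and deg: "\<forall>v\<in>U. Suc k + 1 \<le> card {u\<in>U. E v u}"
    have finU: "finite U" using finV UV finite_subset by blast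
    have "\<exists>C. cyc E C \<and> set C \<subseteq> U"
      by (rule has_cycle[OF UV]) (use ne deg in auto)
    then obtain C0 where "cyc E C0 \<and> set C0 \<subseteq> U" by blast
    then obtain C where C: "cyc E C" "set C \<subseteq> U"
      and sh: "\<forall>C'. cyc E C' \<and> set C' \<subseteq> U \<longrightarrow> length C \<le> length C'"
      using ex_has_least_nat[of "\<lambda>C. cyc E C \<and> set C \<subseteq> U" C0 length] by blast
    define U' where "U' = U - NC C U"
    have U'U: "U' \<subseteq> U" by (auto simp: U'_def)
    have deg': "\<forall>v\<in>U'. k + 1 \<le> card {u\<in>U'. E v u}"
    proof
      fix w assume w: "w \<in> U'"
      have wU: "w \<in> U" "w \<notin> NC C U" using w by (auto simp: U'_def)
      let ?X = "{x \<in> NC C U. E w x}"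
      have finX: "finite ?X" using finU by (auto simp: NC_def)
      have "card ?X \<le> Suc 0" unfolding card_le_Suc0_iff_eq[OF finX]
        using one_nb[OF UV C sh wU] by blast
      moreover have "{u\<in>U. E w u} \<subseteq> {u\<in>U'. E w u} \<union> ?X"
        by (auto simp: U'_def)
      hence "card {u\<in>U. E w u} \<le> card ({u\<in>U'. E w u} \<union> ?X)"
        by (rule card_mono[rotated]) (use finU finX in \<open>auto simp: U'_def\<close>)
      moreover have "card ({u\<in>U'. E w u} \<union> ?X) \<le> card {u\<in>U'. E w u} + card ?X"
        by (rule card_Un_le)
      ultimately show "k + 1 \<le> card {u\<in>U'. E w u}" using deg wU by fastforce
    qed
    have ne': "k = 0 \<or> U' \<noteq> {}"
    proof (cases k)
      case 0 thus ?thesis by simp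
    next
      case (Suc k')
      have "\<forall>v\<in>U. 3 \<le> card {u\<in>U. E v u}" using deg Suc by fastforce
      thus ?thesis using outside_nonempty[OF UV C sh] by (simp add: U'_def)
    qed
    obtain Cs where Cs: "length Cs = k" "good U' Cs"
      using Suc.IH UV U'U ne' deg' by (meson order_trans)
    have sep: "\<forall>x\<in>U'. \<forall>c\<in>set C. \<not> E x c \<and> \<not> E c x \<and> x \<noteq> c"
      using sym by (auto simp: U'_def NC_def)
    have "good U (C # Cs)" by (rule good_cons[OF Cs(2) U'U C sep])
    thus "\<exists>Cs. length Cs = Suc k \<and> good U Cs" using Cs(1) by (intro exI[of _ "C # Cs"]) simp
  qed
qed

definition eU :: "'a set \<Rightarrow> 'a set set" where
  "eU U = {e \<in> edges E. e \<subseteq> U}"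

lemma fin_eU: "finite U \<Longrightarrow> finite (eU U)"
  by (rule finite_subset[of _ "Pow U"]) (auto simp: eU_def)

lemma eU_split:
  assumes finU: "finite U" and v: "v \<in> U"
  shows "card (eU U) = card (eU (U - {v})) + card {u\<in>U. E v u}"
proof -
  have eq: "eU U = eU (U - {v}) \<union> (\<lambda>u. {v, u}) ` {u\<in>U. E v u}"
  proof
    show "eU U \<subseteq> eU (U - {v}) \<union> (\<lambda>u. {v, u}) ` {u\<in>U. E v u}"
    proof
      fix e assume e: "e \<in> eU U"
      then obtain a b where ab: "e = {a, b}" "E a b" "e \<subseteq> U" by (auto simp: eU_def edges_def)
      show "e \<in> eU (U - {v}) \<union> (\<lambda>u. {v, u}) ` {u\<in>U. E v u}"
      proof (cases "v \<in> e")
        case True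
        hence "v = a \<or> v = b" using ab by auto
        thus ?thesis
        proof
          assume "v = a" thus ?thesis using ab by auto
        next
          assume "v = b"
          hence "e = {v, a}" "E v a" using ab sym by auto
          thus ?thesis using ab by auto
        qed
      next
        case False thus ?thesis using e by (auto simp: eU_def)
      qed
    qed
    show "eU (U - {v}) \<union> (\<lambda>u. {v, u}) ` {u\<in>U. E v u} \<subseteq> eU U"
      using v by (auto simp: eU_def edges_def)
  qed
  have disj: "eU (U - {v}) \<inter> (\<lambda>u. {v, u}) ` {u\<in>U. E v u} = {}" by (auto simp: eU_def)
  have inj: "inj_on (\<lambda>u. {v, u}) {u\<in>U. E v u}"
    by (rule inj_onI) (auto simp: doubleton_eq_iff)
  have "card (eU U) = card (eU (U - {v})) + card ((\<lambda>u. {v, u}) ` {u\<in>U. E v u})"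
    unfolding eq by (rule card_Un_disjoint) (use finU fin_eU disj in auto)
  thus ?thesis using card_image[OF inj] by simp
qed

lemma dense:
  "finite U \<Longrightarrow> k * card U < card (eU U) \<Longrightarrow>
    \<exists>W\<subseteq>U. W \<noteq> {} \<and> (\<forall>v\<in>W. k + 1 \<le> card {u\<in>W. E v u})"
proof (induction "card U" arbitrary: U rule: less_induct)
  case less
  show ?case
  proof (cases "\<forall>v\<in>U. k + 1 \<le> card {u\<in>U. E v u}")
    case True
    have "eU {} = {}" by (auto simp: eU_def edges_def)
    hence "U \<noteq> {}" using less.prems by auto
    thus ?thesis using True by blast
  next
    case False
    then obtain v where v: "v \<in> U" "card {u\<in>U. E v u} \<le> k" by force
    have cs: "card (eU U) = card (eU (U - {v})) + card {u\<in>U. E v u}"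
      using eU_split[OF less.prems(1) v(1)] .
    have cU: "card (U - {v}) + 1 = card U" using v less.prems(1)
      by (metis card_Diff1_less card_Suc_Diff1 Suc_eq_plus1)
    have "k * card (U - {v}) < card (eU (U - {v}))"
    proof -
      have "k * card U = k * card (U - {v}) + k" using cU by (metis add_mult_distrib2 mult.right_neutral)
      thus ?thesis using less.prems(2) cs v(2) by linarith
    qed
    moreover have "card (U - {v}) < card U" using cU by simp
    ultimately obtain W where "W \<subseteq> U - {v}" "W \<noteq> {}" "\<forall>v\<in>W. k + 1 \<le> card {u\<in>W. E v u}"
      using less.hyps[of "U - {v}"] less.prems(1) by auto
    thus ?thesis by blast
  qed
qed

lemma bound: "O_free V E k \<Longrightarrow> card (edges E) \<le> k * card V"
proof (rule ccontr)
  assume O: "O_free V E k" and "\<not> card (edges E) \<le> k * card V"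
  moreover have "eU V = edges E" using sg by (auto simp: eU_def edges_def simple_graph_def)
  ultimately have lt: "k * card V < card (eU V)" by simp
  obtain W where W: "W \<subseteq> V" "W \<noteq> {}" "\<forall>v\<in>W. k + 1 \<le> card {u\<in>W. E v u}"
    using dense[OF finV lt] by blast
  have "\<exists>Cs. length Cs = k \<and> good W Cs" using main[rule_format, of W] W by simp
  then obtain Cs where Cs: "length Cs = k" "good W Cs" by blast
  hence g: "good V Cs" using W(1) unfolding good_def by blast
  have c1: "\<forall>i<k. is_cycle V E (Cs!i)" using g Cs(1) unfolding good_def is_cycle_cyc by blast
  have c2: "\<forall>i<k. \<forall>j<k. i \<noteq> j \<longrightarrow> set (Cs ! i) \<inter> set (Cs ! j) = {} \<and>
          independent_sets E (set (Cs ! i)) (set (Cs ! j))" using g Cs(1) unfolding good_def by blast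
  show False using O Cs(1) c1 c2 unfolding O_free_def by blast
qed

end

theorem mainTheorem9:
  fixes V :: "'a set" and E :: "'a \<Rightarrow> 'a \<Rightarrow> bool" and k :: nat
  assumes "k \<ge> 1"
    and "simple_graph V E"
    and "O_free V E k"
    and "girth_at_least V E 11"
  shows "2 * real (card (edges E)) / real (card V) \<le> 2 * real k"
proof -
  interpret G V E using assms(2,4) by unfold_locales
  have b: "card (edges E) \<le> k * card V" using bound assms(3) .
  have "card V > 0" using assms(2) by (simp add: simple_graph_def card_gt_0_iff)
  hence pos: "real (card V) > 0" by simp
  have "real (card (edges E)) \<le> real (k * card V)" using b by (simp only: of_nat_le_iff)
  hence "2 * real (card (edges E)) \<le> 2 * real k * real (card V)" by simp
  thus ?thesis using pos by (simp add: pos_divide_le_eq)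
qed

end
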